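(* If $\beta_\varphi>0$ and the limit $\zeta_\varphi=\lim_{r\to\infty}\frac{\log\varphi(r)}{\log\varphi(r^2)}$ exists, then $\alpha_{\varphi,s}=1$.
   Context: Let $R_0>0$. $\varphi:(R_0,\infty)\to(0,\infty)$ is a non-decreasing unbounded function with $\log r\le\varphi(r)\le r$ for $r\ge R_0$; $s:(R_0,\infty)\to(0,\infty)$ is non-decreasing with $r<s(r)\le r^2$ for $r\ge R_0$ and $\liminf_{r\to\infty}s(r)/r>1$. $\alpha_{\varphi,s}=\liminf_{r\to\infty}\frac{\log\varphi(r)}{\log\varphi(s(r))}$, $\beta_\varphi=\limsup_{r\to\infty}\frac{\log\log r}{\log\varphi(r)}$. *)

theory Defs
  imports "HOL-Analysis.Analysis"
begin

definition admissible_pair :: "real \<Rightarrow> (real \<Rightarrow> real) \<Rightarrow> (real \<Rightarrow> real) \<Rightarrow> bool" where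
  "admissible_pair R0 \<phi> s \<longleftrightarrow>
     R0 > 0 \<and>
     (\<forall>r>R0. \<phi> r > 0) \<and> mono_on {R0<..} \<phi> \<and> (\<forall>M. \<exists>r>R0. \<phi> r > M) \<and>
     (\<forall>r>R0. ln r \<le> \<phi> r \<and> \<phi> r \<le> r) \<and>
     (\<forall>r>R0. s r > 0) \<and> mono_on {R0<..} s \<and>
     (\<forall>r>R0. r < s r \<and> s r \<le> r\<^sup>2) \<and>
     Liminf at_top (\<lambda>r. ereal (s r / r)) > 1"

definition alpha_phi_s :: "(real \<Rightarrow> real) \<Rightarrow> (real \<Rightarrow> real) \<Rightarrow> ereal" where
  "alpha_phi_s \<phi> s = Liminf at_top (\<lambda>r. ereal (ln (\<phi> r) / ln (\<phi> (s r))))"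

definition beta_phi :: "(real \<Rightarrow> real) \<Rightarrow> ereal" where
  "beta_phi \<phi> = Limsup at_top (\<lambda>r. ereal (ln (ln r) / ln (\<phi> r)))"

end

theory Submission
  imports Defs "HOL-Real_Asymp.Real_Asymp"
begin

lemma geo_lower:
  fixes g :: "real \<Rightarrow> real"
  assumes c: "0 < c" "c < 1" and g0: "g u0 > 0"
    and mono: "\<And>x y. u0 \<le> x \<Longrightarrow> x \<le> y \<Longrightarrow> g x \<le> g y"
    and step: "\<And>u. u \<ge> u0 \<Longrightarrow> g (u + ln 2) \<ge> g u / c"
  shows "t \<ge> 0 \<Longrightarrow> g (u0 + real n * ln 2 + t) \<ge> g u0 * (1/c)^n"
proof (induction n arbitrary: t)
  case 0
  then show ?case using mono[of u0 "u0 + t"] by simp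
next
  case (Suc n)
  have ln2: "ln (2::real) > 0" by simp
  have "g (u0 + real n * ln 2 + t) \<ge> g u0 * (1/c)^n" using Suc by simp
  moreover have "g (u0 + real n * ln 2 + t + ln 2) \<ge> g (u0 + real n * ln 2 + t) / c"
    by (rule step) (use Suc.prems ln2 in simp)
  ultimately have "g (u0 + real n * ln 2 + t + ln 2) \<ge> g u0 * (1/c)^n / c"
    using c by (smt (verit) divide_right_mono)
  moreover have "u0 + real (Suc n) * ln 2 + t = u0 + real n * ln 2 + t + ln 2"
    by (simp add: algebra_simps)
  ultimately show ?case by (simp add: field_simps)
qed

lemma ratio_zero:
  fixes g :: "real \<Rightarrow> real"
  assumes c: "0 < c" "c < 1" and g0: "g u0 > 0"
    and mono: "\<And>x y. u0 \<le> x \<Longrightarrow> x \<le> y \<Longrightarrow> g x \<le> g y"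
    and step: "\<And>u. u \<ge> u0 \<Longrightarrow> g (u + ln 2) \<ge> g u / c"
  shows "((\<lambda>u. u / g u) \<longlongrightarrow> 0) at_top"
proof -
  define b where "b = 1 / c"
  have b1: "b > 1" using c by (simp add: b_def)
  have ln2: "ln (2::real) > 0" by simp
  have bound: "u / g u \<le> u / (g u0 * b powr ((u - u0)/ln 2 - 1))" if u: "u \<ge> u0" "u \<ge> 0" for u
  proof -
    define n where "n = nat \<lfloor>(u - u0) / ln 2\<rfloor>"
    have x0: "(u - u0) / ln 2 \<ge> 0" using u ln2 by simp
    hence rn: "real n = of_int \<lfloor>(u - u0) / ln 2\<rfloor>" unfolding n_def by simp
    have fl: "real n \<le> (u - u0) / ln 2" "real n > (u - u0) / ln 2 - 1"
      using rn of_int_floor_le[of "(u - u0) / ln 2"]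
        real_of_int_floor_add_one_gt[of "(u - u0) / ln 2"] by linarith+
    define t where "t = u - u0 - real n * ln 2"
    have t0: "t \<ge> 0" using fl(1) ln2 unfolding t_def by (simp add: field_simps)
    have "g (u0 + real n * ln 2 + t) \<ge> g u0 * (1/c)^n"
      by (rule geo_lower[OF c g0 mono step t0])
    hence gu: "g u \<ge> g u0 * b^n" unfolding t_def b_def by simp
    have "b powr ((u - u0)/ln 2 - 1) \<le> b powr (real n)"
      using b1 fl(2) by (intro powr_mono) auto
    also have "\<dots> = b ^ n" using b1 by (simp add: powr_realpow)
    finally have "g u0 * b powr ((u - u0)/ln 2 - 1) \<le> g u" using gu g0
      by (smt (verit) mult_left_mono)
    moreover have "g u0 * b powr ((u - u0)/ln 2 - 1) > 0" using g0 b1 by simp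
    ultimately show ?thesis using u(2) by (simp add: frac_le)
  qed
  have lim: "((\<lambda>u. u / (g u0 * b powr ((u - u0)/ln 2 - 1))) \<longlongrightarrow> 0) at_top"
    using b1 g0 by real_asymp
  show ?thesis
  proof (rule tendsto_sandwich[OF _ _ tendsto_const lim])
    show "\<forall>\<^sub>F u in at_top. 0 \<le> u / g u"
      using eventually_ge_at_top[of "max u0 0"]
    proof (rule eventually_mono)
      fix u assume "max u0 0 \<le> u"
      moreover have "g u > 0" using mono[of u0 u] g0 \<open>max u0 0 \<le> u\<close> by simp
      ultimately show "0 \<le> u / g u" by simp
    qed
    show "\<forall>\<^sub>F u in at_top. u / g u \<le> u / (g u0 * b powr ((u - u0)/ln 2 - 1))"
      using eventually_ge_at_top[of "max u0 0"] by (rule eventually_mono) (simp add: bound)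
  qed
qed

theorem lemma3p4:
  fixes R0 :: real and \<phi> s :: "real \<Rightarrow> real"
  assumes "admissible_pair R0 \<phi> s"
    and "beta_phi \<phi> > 0"
    and "\<exists>\<zeta>::real. ((\<lambda>r. ln (\<phi> r) / ln (\<phi> (r\<^sup>2))) \<longlongrightarrow> \<zeta>) at_top"
  shows "alpha_phi_s \<phi> s = 1"
proof -
  note adm = assms(1)[unfolded admissible_pair_def]
  have R0: "R0 > 0" and lnphi: "\<And>r. r > R0 \<Longrightarrow> ln r \<le> \<phi> r"
    and mono: "mono_on {R0<..} \<phi>" and sr: "\<And>r. r > R0 \<Longrightarrow> r < s r \<and> s r \<le> r\<^sup>2"
    using adm by auto
  have mono': "\<phi> x \<le> \<phi> y" if "R0 < x" "x \<le> y" for x y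
    using mono that by (auto intro: mono_onD)
  define r1 where "r1 = max R0 (exp 1) + 1"
  have r1: "r1 > R0" "r1 > exp 1" "r1 > 1" unfolding r1_def
    using one_less_exp_iff[of 1] R0 by auto
  have phi1: "\<phi> r > 1" if "r \<ge> r1" for r
  proof -
    have "ln r > ln (exp 1)" using that r1 by (subst ln_less_cancel_iff) auto
    hence "ln r > 1" by simp
    moreover have "ln r \<le> \<phi> r" by (rule lnphi) (use that r1 in linarith)
    ultimately show ?thesis by linarith
  qed
  have pos: "ln (\<phi> r) > 0" if "r \<ge> r1" for r using phi1[OF that] by simp
  have sq: "r \<le> r\<^sup>2" if "r \<ge> 1" for r :: real using that by (simp add: power2_eq_square)
  have lnmono: "ln (\<phi> x) \<le> ln (\<phi> y)" if "r1 \<le> x" "x \<le> y" for x y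
  proof -
    have "\<phi> x > 1" "\<phi> y > 1" using phi1 that by auto
    moreover have "\<phi> x \<le> \<phi> y" by (rule mono') (use that r1 in linarith)+
    ultimately show ?thesis by simp
  qed
  obtain \<zeta> where z: "((\<lambda>r. ln (\<phi> r) / ln (\<phi> (r\<^sup>2))) \<longlongrightarrow> \<zeta>) at_top" using assms(3) by blast
  have ev_le1: "\<forall>\<^sub>F r in at_top. ln (\<phi> r) / ln (\<phi> (r\<^sup>2)) \<le> 1"
    using eventually_ge_at_top[of r1]
  proof (rule eventually_mono)
    fix r assume r: "r1 \<le> r"
    have "ln (\<phi> r) \<le> ln (\<phi> (r\<^sup>2))" using lnmono[of r "r^2"] sq[of r] r r1 by auto
    thus "ln (\<phi> r) / ln (\<phi> (r\<^sup>2)) \<le> 1" using pos[of "r^2"] r r1 sq[of r]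
      by (simp add: divide_le_eq)
  qed
  have ev_ge0: "\<forall>\<^sub>F r in at_top. ln (\<phi> r) / ln (\<phi> (r\<^sup>2)) \<ge> 0"
    using eventually_ge_at_top[of r1]
  proof (rule eventually_mono)
    fix r assume r: "r1 \<le> r"
    thus "ln (\<phi> r) / ln (\<phi> (r\<^sup>2)) \<ge> 0" using pos[of "r^2"] pos[of r] r1 sq[of r] by simp
  qed
  have z1: "\<zeta> \<le> 1" using tendsto_upperbound[OF z ev_le1] by simp
  have z0: "\<zeta> \<ge> 0" using tendsto_lowerbound[OF z ev_ge0] by simp
  have zeq: "\<zeta> = 1"
  proof (rule ccontr)
    assume "\<zeta> \<noteq> 1"
    hence zl: "\<zeta> < 1" using z1 by simp
    define c where "c = (1 + \<zeta>) / 2"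
    have c: "0 < c" "c < 1" "\<zeta> < c" using z0 zl by (auto simp: c_def)
    have "\<forall>\<^sub>F r in at_top. ln (\<phi> r) / ln (\<phi> (r\<^sup>2)) < c"
      using order_tendstoD(2)[OF z c(3)] .
    then obtain r2 where r2: "\<And>r. r \<ge> r2 \<Longrightarrow> ln (\<phi> r) / ln (\<phi> (r\<^sup>2)) < c"
      by (auto simp: eventually_at_top_linorder)
    define r3 where "r3 = max r1 r2"
    have r3: "r3 \<ge> r1" "r3 \<ge> r2" "r3 > 1" using r1 by (auto simp: r3_def)
    define g where "g = (\<lambda>u. ln (\<phi> (exp (exp u))))"
    define u0 where "u0 = ln (ln r3)"
    have lnr3: "ln r3 > 0" using r3 by simp
    have ee: "exp (exp u) \<ge> r3" if "u \<ge> u0" for u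
    proof -
      have "exp u \<ge> exp u0" using that by simp
      moreover have "exp u0 = ln r3" using lnr3 by (simp add: u0_def)
      ultimately have "exp (exp u) \<ge> exp (ln r3)" by simp
      thus ?thesis using r3 by simp
    qed
    have g0: "g u0 > 0" unfolding g_def u0_def using lnr3 r3 pos[of r3] by simp
    have gmono: "g x \<le> g y" if "u0 \<le> x" "x \<le> y" for x y
      unfolding g_def using lnmono ee[of x] that r3 by auto
    have gstep: "g (u + ln 2) \<ge> g u / c" if "u \<ge> u0" for u
    proof -
      define r where "r = exp (exp u)"
      have rr: "r \<ge> r1" "r \<ge> r2" using ee[OF that] r3 unfolding r_def by auto
      have "exp (exp (u + ln 2)) = r\<^sup>2" unfolding r_def
        by (simp add: exp_add power2_eq_square exp_add[symmetric])
      hence gl: "g (u + ln 2) = ln (\<phi> (r\<^sup>2))" unfolding g_def by simp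
      have gu: "g u = ln (\<phi> r)" unfolding g_def r_def by simp
      have p2: "ln (\<phi> (r\<^sup>2)) > 0" using pos[of "r^2"] rr r1 sq[of r] by simp
      have "ln (\<phi> r) / ln (\<phi> (r\<^sup>2)) < c" using r2 rr by simp
      hence "ln (\<phi> r) < c * ln (\<phi> (r\<^sup>2))" using p2 by (simp add: divide_less_eq)
      thus ?thesis using gl gu c by (simp add: divide_le_eq mult.commute)
    qed
    have lim0: "((\<lambda>u. u / g u) \<longlongrightarrow> 0) at_top"
      by (rule ratio_zero[OF c(1,2) g0 gmono gstep])
    have lnln: "filterlim (\<lambda>r::real. ln (ln r)) at_top at_top" by real_asymp
    have "((\<lambda>r. ln (ln r) / g (ln (ln r))) \<longlongrightarrow> 0) at_top"
      using filterlim_compose[OF lim0 lnln] by (simp add: o_def)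
    moreover have evq: "\<forall>\<^sub>F r in at_top. ln (ln r) / g (ln (ln r)) = ln (ln r) / ln (\<phi> r)"
      using eventually_gt_at_top[of "exp 1"]
    proof (rule eventually_mono)
      fix r :: real assume r: "exp 1 < r"
      have "r > 1" using r one_less_exp_iff[of 1] by linarith
      hence "ln r > 0" by simp
      thus "ln (ln r) / g (ln (ln r)) = ln (ln r) / ln (\<phi> r)" unfolding g_def
        using \<open>r > 1\<close> by simp
    qed
    ultimately have "((\<lambda>r. ln (ln r) / ln (\<phi> r)) \<longlongrightarrow> 0) at_top"
      by (rule Lim_transform_eventually)
    hence "((\<lambda>r. ereal (ln (ln r) / ln (\<phi> r))) \<longlongrightarrow> ereal 0) at_top"
      by (simp add: tendsto_ereal)
    hence "Limsup at_top (\<lambda>r. ereal (ln (ln r) / ln (\<phi> r))) = ereal 0"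
      by (intro lim_imp_Limsup) simp_all
    hence "beta_phi \<phi> = 0" unfolding beta_phi_def by simp
    thus False using assms(2) by simp
  qed
  have zz: "((\<lambda>r. ln (\<phi> r) / ln (\<phi> (r\<^sup>2))) \<longlongrightarrow> 1) at_top" using z zeq by simp
  have main: "((\<lambda>r. ln (\<phi> r) / ln (\<phi> (s r))) \<longlongrightarrow> 1) at_top"
  proof (rule tendsto_sandwich[OF _ _ zz tendsto_const])
    show "\<forall>\<^sub>F r in at_top. ln (\<phi> r) / ln (\<phi> (r\<^sup>2)) \<le> ln (\<phi> r) / ln (\<phi> (s r))"
      using eventually_ge_at_top[of r1]
    proof (rule eventually_mono)
      fix r assume r: "r1 \<le> r"
      have s: "r < s r" "s r \<le> r\<^sup>2" using sr[of r] r r1 by auto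
      have "ln (\<phi> (s r)) \<le> ln (\<phi> (r\<^sup>2))" using lnmono[of "s r" "r^2"] s r by auto
      moreover have "ln (\<phi> (s r)) > 0" using pos[of "s r"] s r by auto
      moreover have "ln (\<phi> r) > 0" using pos[of r] r by auto
      ultimately show "ln (\<phi> r) / ln (\<phi> (r\<^sup>2)) \<le> ln (\<phi> r) / ln (\<phi> (s r))"
        by (intro divide_left_mono) auto
    qed
    show "\<forall>\<^sub>F r in at_top. ln (\<phi> r) / ln (\<phi> (s r)) \<le> 1"
      using eventually_ge_at_top[of r1]
    proof (rule eventually_mono)
      fix r assume r: "r1 \<le> r"
      have s: "r < s r" using sr[of r] r r1 by auto
      have "ln (\<phi> r) \<le> ln (\<phi> (s r))" using lnmono[of r "s r"] s r by auto
      moreover have "ln (\<phi> (s r)) > 0" using pos[of "s r"] s r by auto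
      ultimately show "ln (\<phi> r) / ln (\<phi> (s r)) \<le> 1" by (simp add: divide_le_eq)
    qed
  qed
  hence "((\<lambda>r. ereal (ln (\<phi> r) / ln (\<phi> (s r)))) \<longlongrightarrow> ereal 1) at_top"
    by (simp add: tendsto_ereal)
  hence "Liminf at_top (\<lambda>r. ereal (ln (\<phi> r) / ln (\<phi> (s r)))) = ereal 1"
    by (intro lim_imp_Liminf) simp_all
  thus ?thesis unfolding alpha_phi_s_def by simp
qed

end
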